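(* In the setting of the context, regard the error exponent $K=K(a)$ as a function of $a\in[0,1]$ with $\Pi_0,\sigma^2$ fixed. If $\Gamma=\Pi_0/\sigma^2<1$, then there exists $a_m\in(0,1)$ at which $K$ attains its maximum over $[0,1]$, and $a_m$ is a solution of the equation $$[1+a^2+\Gamma(1-a^2)]^2-2\Big(r_e+\frac{a^4}{r_e}\Big)=0,\qquad r_e=R_e/\sigma^2,$$ where $R_e=P+\sigma^2$ with $P=\frac{\sqrt{[\sigma^2(1-a^2)-Q]^2+4\sigma^2Q}-\sigma^2(1-a^2)+Q}{2}$ and $Q=\Pi_0(1-a^2)$. Moreover, $a_m\to1$ as $\Gamma\to0$. Consequently, for the sampled diffusion with $a=e^{-A\Delta}$ ($A>0$), the optimal sensor spacing is $\Delta^*=-\log(a_m)/A$.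
   Context: Model: fix $a\in[0,1]$, $\Pi_0>0$, $\sigma^2>0$. The signal is a stationary Gaussian first-order autoregressive sequence $s_{i+1}=a s_i+u_i$, $i\ge1$, with $s_1\sim\mathcal N(0,\Pi_0)$ and $u_i$ i.i.d. $\mathcal N(0,Q)$, $Q=\Pi_0(1-a^2)$, independent of $s_1$. Observations follow $H_0: y_i=w_i$ or $H_1: y_i=s_i+w_i$, $w_i$ i.i.d. $\mathcal N(0,\sigma^2)$ independent of the signal; $\Gamma=\Pi_0/\sigma^2$ is the SNR. In the sensor application the samples come from a stationary diffusion $ds/dx=-As(x)+Bu(x)$ sampled at spacing $\Delta$, giving $a=e^{-A\Delta}$. The error exponent $K$ is $-\lim_{n\to\infty}\frac1n\log P_M(n)$, where $P_M(n)$ is the miss probability of the level-$\alpha$ Neyman–Pearson detector based on $y_1,\dots,y_n$ (independent of $\alpha\in(0,1)$); explicitly $K=\frac{1}{2\pi}\int_0^{2\pi} D(\mathcal N(0,\sigma^2)\|\mathcal N(0,S_y(\omega)))\,d\omega$ with $S_y(\omega)=\sigma^2+\frac{\Pi_0(1-a^2)}{1-2a\cos\omega+a^2}$, $D$ the Kullback–Leibler divergence. *)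

theory Defs
  imports "HOL-Analysis.Analysis"
begin

text \<open>Kullback--Leibler divergence D(N(0,v1) || N(0,v2)) between centred Gaussians.\<close>
definition gauss_KL :: "real \<Rightarrow> real \<Rightarrow> real" where
  "gauss_KL v1 v2 = (ln (v2 / v1) + v1 / v2 - 1) / 2"

text \<open>Power spectral density of y under H1; s2 is the noise variance sigma^2.\<close>
definition spec_y :: "real \<Rightarrow> real \<Rightarrow> real \<Rightarrow> real \<Rightarrow> real" where
  "spec_y Pi0 s2 a \<omega> = s2 + Pi0 * (1 - a\<^sup>2) / (1 - 2 * a * cos \<omega> + a\<^sup>2)"

definition err_exp :: "real \<Rightarrow> real \<Rightarrow> real \<Rightarrow> real" where
  "err_exp Pi0 s2 a =
     integral {0..2*pi} (\<lambda>\<omega>. gauss_KL s2 (spec_y Pi0 s2 a \<omega>)) / (2 * pi)"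

definition Q_of :: "real \<Rightarrow> real \<Rightarrow> real" where
  "Q_of Pi0 a = Pi0 * (1 - a\<^sup>2)"

definition P_of :: "real \<Rightarrow> real \<Rightarrow> real \<Rightarrow> real" where
  "P_of Pi0 s2 a =
     (sqrt ((s2 * (1 - a\<^sup>2) - Q_of Pi0 a)\<^sup>2 + 4 * s2 * Q_of Pi0 a)
        - s2 * (1 - a\<^sup>2) + Q_of Pi0 a) / 2"

definition Re_of :: "real \<Rightarrow> real \<Rightarrow> real \<Rightarrow> real" where
  "Re_of Pi0 s2 a = P_of Pi0 s2 a + s2"

definition opt_eq_lhs :: "real \<Rightarrow> real \<Rightarrow> real \<Rightarrow> real" where
  "opt_eq_lhs Pi0 s2 a =
     (let \<Gamma> = Pi0 / s2; r = Re_of Pi0 s2 a / s2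
      in (1 + a\<^sup>2 + \<Gamma> * (1 - a\<^sup>2))\<^sup>2 - 2 * (r + a ^ 4 / r))"

end

theory Submission
  imports Defs "HOL-Complex_Analysis.Complex_Analysis"
begin


lemma mean_value_disc:
  fixes g :: "complex \<Rightarrow> complex"
  assumes "g holomorphic_on cball 0 1"
  shows "((\<lambda>t. g (cis t)) has_integral (2 * of_real pi * g 0)) {0..2*pi}"
proof -
  have "((\<lambda>u. g u/(u-0)) has_contour_integral (2*pi*\<i>*g 0)) (circlepath 0 1)"
    using Cauchy_integral_circlepath_simple[OF assms, of 0] by simp
  then have "((\<lambda>t. g (0 + of_real 1*cis t)/(0+ of_real 1*cis t - 0) * of_real 1 * \<i> * cis t) has_integral (2*pi*\<i>*g 0)) {0..2*pi}"
    unfolding circlepath_def by (subst has_contour_integral_part_circlepath_iff[symmetric]) auto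
  moreover have "(\<lambda>t. g (0 + of_real 1*cis t)/(0+ of_real 1*cis t - 0) * of_real 1 * \<i> * cis t) = (\<lambda>t. \<i> * g (cis t))"
    by (rule ext) (simp add: field_simps)
  ultimately have "((\<lambda>t. \<i> * g (cis t)) has_integral (2*pi*\<i>*g 0)) {0..2*pi}" by simp
  then have "((\<lambda>t. (-\<i>) * (\<i> * g (cis t))) has_integral ((-\<i>) * (2*pi*\<i>*g 0))) {0..2*pi}"
    by (rule has_integral_mult_right)
  moreover have "2 * complex_of_real pi * \<i> * g 0 = \<i> * (2 * complex_of_real pi * g 0)" by (simp only: ac_simps)
  ultimately show ?thesis by simp
qed

lemma mean_value_disc_Re:
  fixes g :: "complex \<Rightarrow> complex"
  assumes "g holomorphic_on cball 0 1"
  shows "((\<lambda>t. Re (g (cis t))) has_integral (2*pi*Re (g 0))) {0..2*pi}"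
  using has_integral_linear[OF mean_value_disc[OF assms] bounded_linear_Re] by (simp add: o_def)

lemma norm_one_minus_cis:
  "(cmod (1 - of_real b * cis t))\<^sup>2 = 1 + b\<^sup>2 - 2*b * cos t"
proof -
  have "(cmod (1 - of_real b * cis t))\<^sup>2 = (1 - b * cos t)\<^sup>2 + (b * sin t)\<^sup>2"
    by (simp add: cmod_power2)
  also have "\<dots> = 1 + b\<^sup>2 * ((sin t)\<^sup>2 + (cos t)\<^sup>2) - 2*b * cos t"
    by algebra
  finally show ?thesis by (simp only: sin_cos_squared_add mult_1_right)
qed

lemma pos_denom: fixes b t :: real assumes "0 \<le> b" "b < 1" shows "1 + b\<^sup>2 - 2*b * cos t > 0"
proof -
  have "b * cos t \<le> b" using assms cos_le_one[of t] by (metis mult_left_mono mult.right_neutral)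
  then have "1 + b\<^sup>2 - 2*b * cos t \<ge> (1-b)\<^sup>2" by (simp add: power2_eq_square algebra_simps)
  moreover have "(1-b)\<^sup>2 > 0" using assms by simp
  ultimately show ?thesis by linarith
qed

lemma holo_aux:
  assumes "0 \<le> b" "b < 1" "z \<in> cball (0::complex) 1"
  shows "Re (1 - of_real b * z) > 0"
proof -
  have "\<bar>Re z\<bar> \<le> 1" using assms(3) abs_Re_le_cmod[of z] by (simp add: dist_norm)
  then have "b * Re z \<le> b" using assms by (metis abs_le_D1 mult_left_le)
  then show ?thesis using assms by simp
qed

lemma integral_poisson:
  assumes "0 \<le> b" "b < 1"
  shows "((\<lambda>t. 1 / (1 + b\<^sup>2 - 2*b * cos t)) has_integral (2*pi/(1-b\<^sup>2))) {0..2*pi}"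
proof -
  let ?g = "\<lambda>z::complex. (1 + of_real b * z) / (1 - of_real b * z)"
  have nz: "1 - of_real b * z \<noteq> 0" if "z \<in> cball 0 1" for z :: complex
  proof
    assume "1 - of_real b * z = 0"
    then have "Re (1 - of_real b * z) = 0" by simp
    with holo_aux[OF assms that] show False by linarith
  qed
  have "?g holomorphic_on cball 0 1"
    using nz by (intro holomorphic_intros) auto
  from mean_value_disc_Re[OF this]
  have h: "((\<lambda>t. Re (?g (cis t))) has_integral (2*pi)) {0..2*pi}" by simp
  have eq: "Re (?g (cis t)) = (1 - b\<^sup>2) * (1 / (1 + b\<^sup>2 - 2*b * cos t))" for t
  proof -
    have "Re (?g (cis t)) = ((1 + b * cos t)*(1 - b * cos t) - (b * sin t)*(b * sin t)) / (cmod (1 - of_real b * cis t))\<^sup>2"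
      by (simp add: Re_divide')
    also have "\<dots> = (1 - b\<^sup>2) / (1 + b\<^sup>2 - 2*b * cos t)"
    proof -
      have sc: "b\<^sup>2 * (sin t)\<^sup>2 + b\<^sup>2 * (cos t)\<^sup>2 = b\<^sup>2"
        by (metis distrib_left mult.right_neutral sin_cos_squared_add)
      have "(1 + b * cos t)*(1 - b * cos t) - (b * sin t)*(b * sin t) = 1 - (b\<^sup>2 * (sin t)\<^sup>2 + b\<^sup>2 * (cos t)\<^sup>2)"
        by (simp add: algebra_simps power2_eq_square)
      then have num: "(1 + b * cos t)*(1 - b * cos t) - (b * sin t)*(b * sin t) = 1 - b\<^sup>2"
        by (simp only: sc)
      show ?thesis by (simp only: norm_one_minus_cis num)
    qed
    finally show ?thesis by simp
  qed
  have "((\<lambda>t. (1/(1-b\<^sup>2)) * Re (?g (cis t))) has_integral ((1/(1-b\<^sup>2))*(2*pi))) {0..2*pi}"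
    by (rule has_integral_mult_right[OF h])
  moreover have "b * b \<le> b" using assms by (intro mult_left_le) auto
  then have nz2: "b\<^sup>2 \<noteq> 1" using assms by (simp add: power2_eq_square)
  moreover have "(\<lambda>t. (1/(1-b\<^sup>2)) * Re (?g (cis t))) = (\<lambda>t. 1 / (1 + b\<^sup>2 - 2*b*cos t))"
    using nz2 by (intro ext) (simp add: eq)
  ultimately show ?thesis by simp
qed

lemma integral_logpoisson:
  assumes "0 \<le> b" "b < 1"
  shows "((\<lambda>t. ln (1 + b\<^sup>2 - 2*b * cos t)) has_integral 0) {0..2*pi}"
proof -
  let ?g = "\<lambda>z::complex. 2 * Ln (1 - of_real b * z)"
  have np: "1 - of_real b * z \<notin> \<real>\<^sub>\<le>\<^sub>0" if "z \<in> cball 0 1" for z :: complex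
  proof
    assume "1 - of_real b * z \<in> \<real>\<^sub>\<le>\<^sub>0"
    then have "Re (1 - of_real b * z) \<le> 0" by (simp only: complex_nonpos_Reals_iff)
    with holo_aux[OF assms that] show False by linarith
  qed
  have "?g holomorphic_on cball 0 1"
    using np by (intro holomorphic_intros) auto
  from mean_value_disc_Re[OF this]
  have h: "((\<lambda>t. Re (?g (cis t))) has_integral 0) {0..2*pi}" by simp
  have nz: "1 - of_real b * cis t \<noteq> 0" for t
    using np[of "cis t"] by auto
  have eq: "Re (?g (cis t)) = ln (1 + b\<^sup>2 - 2*b * cos t)" for t
  proof -
    have "Re (?g (cis t)) = 2 * Re (Ln (1 - of_real b * cis t))" by simp
    also have "2 * Re (Ln (1 - of_real b * cis t)) = 2 * ln (cmod (1 - of_real b * cis t))" using nz by simp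
    also have "\<dots> = ln ((cmod (1 - of_real b * cis t))\<^sup>2)"
      using nz by (simp add: ln_realpow)
    finally show ?thesis by (simp only: norm_one_minus_cis)
  qed
  show ?thesis using h by (simp only: eq)
qed



definition kf :: "real \<Rightarrow> real \<Rightarrow> real" where
  "kf G r = ln r - G*(r-1)/(1+G-(1-G)*r)"

definition cc :: "real \<Rightarrow> real \<Rightarrow> real" where
  "cc G a = 1 + a\<^sup>2 + G*(1-a\<^sup>2)"

definition rr :: "real \<Rightarrow> real \<Rightarrow> real" where
  "rr G a = (cc G a + sqrt((cc G a)\<^sup>2 - 4*a\<^sup>2))/2"

lemma disc_eq: "(cc G a)\<^sup>2 - 4*a\<^sup>2 = ((1-a\<^sup>2) - G*(1-a\<^sup>2))\<^sup>2 + 4*G*(1-a\<^sup>2)"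
  unfolding cc_def by (simp add: power2_eq_square algebra_simps)

lemma Re_of_eq:
  assumes "s2 > 0"
  shows "Re_of Pi0 s2 a / s2 = rr (Pi0/s2) a"
proof -
  define G where "G = Pi0/s2"
  have P: "Pi0 = G * s2" using assms by (simp add: G_def)
  have X: "(s2 * (1 - a\<^sup>2) - Q_of Pi0 a)\<^sup>2 + 4 * s2 * Q_of Pi0 a = s2\<^sup>2 * ((cc G a)\<^sup>2 - 4*a\<^sup>2)"
    unfolding disc_eq Q_of_def P by (simp add: power2_eq_square algebra_simps)
  have sq: "sqrt ((s2 * (1 - a\<^sup>2) - Q_of Pi0 a)\<^sup>2 + 4 * s2 * Q_of Pi0 a) = s2 * sqrt ((cc G a)\<^sup>2 - 4*a\<^sup>2)"
    unfolding X using assms by (simp add: real_sqrt_mult)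
  show ?thesis
    unfolding Re_of_def P_of_def sq rr_def G_def[symmetric]
    using assms by (simp add: Q_of_def P cc_def field_simps)
qed

lemma rr_props:
  assumes G: "G > 0" and a: "0 \<le> a" "a \<le> 1"
  shows "(rr G a)\<^sup>2 - cc G a * rr G a + a\<^sup>2 = 0" "1 \<le> rr G a" "rr G a \<le> 1 + G"
proof -
  define S where "S = sqrt((cc G a)\<^sup>2 - 4*a\<^sup>2)"
  define c where "c = cc G a"
  define u where "u = 1 - a\<^sup>2"
  have u: "0 \<le> u" "u \<le> 1" using a by (auto simp: u_def power_le_one)
  have a2: "a\<^sup>2 = 1 - u" by (simp add: u_def)
  have c: "c = 2 - u + G*u" by (simp add: c_def cc_def u_def)
  have "0 \<le> ((1-a\<^sup>2) - G*(1-a\<^sup>2))\<^sup>2 + 4*G*(1-a\<^sup>2)" using G u by (simp add: u_def)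
  then have nn: "0 \<le> (cc G a)\<^sup>2 - 4*a\<^sup>2" using disc_eq[of G a] by linarith
  have S2: "S\<^sup>2 = c\<^sup>2 - 4*a\<^sup>2" using nn by (simp add: S_def c_def)
  have S0: "S \<ge> 0" using nn by (simp add: S_def)
  have r: "rr G a = (c + S)/2" by (simp add: rr_def S_def c_def)
  show "(rr G a)\<^sup>2 - cc G a * rr G a + a\<^sup>2 = 0"
    unfolding r c_def[symmetric] using S2 by (simp add: power2_eq_square field_simps)
  have "(2 - c)\<^sup>2 \<le> S\<^sup>2" unfolding S2 a2 c using G u by (simp add: power2_eq_square algebra_simps)
  then have "\<bar>2 - c\<bar> \<le> S" using S0 by (metis abs_le_square_iff abs_of_nonneg)
  then show "1 \<le> rr G a" unfolding r by (simp add: abs_le_iff)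
  have "S\<^sup>2 \<le> (2 + 2*G - c)\<^sup>2"
  proof -
    have "(2 + 2*G - c)\<^sup>2 - S\<^sup>2 = 4*G\<^sup>2*(1-u)" unfolding S2 a2 c by (simp add: power2_eq_square algebra_simps)
    moreover have "0 \<le> 4*G\<^sup>2*(1-u)" using u by simp
    ultimately show ?thesis by linarith
  qed
  moreover have "0 \<le> 2 + 2*G - c" unfolding c using G u
    by (smt (verit) mult_left_le mult_nonneg_nonneg)
  ultimately have "S \<le> 2 + 2*G - c" using S0 by (metis abs_le_square_iff abs_of_nonneg)
  then show "rr G a \<le> 1 + G" unfolding r by (simp add: field_simps)
qed

lemma den_pos:
  fixes G r :: real
  assumes "G > 0" "1 \<le> r" "r \<le> 1 + G"
  shows "1 + G - (1-G)*r > 0"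
proof (cases "G \<le> 1")
  case True
  have "(1-G)*r \<le> (1-G)*(1+G)" apply (rule mult_left_mono) using True assms by auto
  also have "\<dots> = 1 - G\<^sup>2" by (simp add: power2_eq_square algebra_simps)
  finally show ?thesis using assms by (smt (verit) zero_less_power)
next
  case False
  then have "(1-G)*r \<le> 0" using assms by (intro mult_nonpos_nonneg) auto
  then show ?thesis using assms by linarith
qed

lemma err_exp_closed:
  assumes s2: "s2 > 0" and Pi0: "Pi0 > 0" and a: "0 \<le> a" "a < 1"
  shows "err_exp Pi0 s2 a = kf (Pi0/s2) (rr (Pi0/s2) a) / 2"
proof -
  define G where "G = Pi0/s2"
  define r where "r = rr G a"
  define c where "c = cc G a"
  define u where "u = 1 - a\<^sup>2"
  define b where "b = a / r"
  have G: "G > 0" using s2 Pi0 by (simp add: G_def)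
  have P: "Pi0 = G * s2" using s2 by (simp add: G_def)
  have quad: "r\<^sup>2 - c * r + a\<^sup>2 = 0" and r1: "1 \<le> r" and r2: "r \<le> 1 + G"
    using rr_props[OF G a(1)] a by (auto simp: r_def c_def)
  have rpos: "r > 0" using r1 by linarith
  have b0: "0 \<le> b" using a rpos by (simp add: b_def)
  have b1: "b < 1" using a r1 rpos by (simp add: b_def field_simps)
  have cr: "c = r * (1 + b\<^sup>2)"
  proof -
    have "c * r = r*r + a*a" using quad by (simp add: power2_eq_square)
    then have "c = (r*r + a*a)/r" using rpos by (simp add: eq_divide_eq)
    also have "\<dots> = r * (1 + b\<^sup>2)" using rpos by (simp add: b_def field_simps power2_eq_square)
    finally show ?thesis .
  qed
  have cdef: "c = 1 + a\<^sup>2 + G * u" by (simp add: c_def cc_def u_def)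
  have rb: "r * b = a" using rpos by (simp add: b_def)
  define da where "da = (\<lambda>w::real. 1 + a\<^sup>2 - 2*a*cos w)"
  define db where "db = (\<lambda>w::real. 1 + b\<^sup>2 - 2*b*cos w)"
  have dapos: "da w > 0" for w unfolding da_def using pos_denom a by simp
  have dbpos: "db w > 0" for w unfolding db_def using pos_denom b0 b1 by simp
  have spec: "spec_y Pi0 s2 a w = s2 * (r * db w / da w)" for w
  proof -
    have e1: "1 - 2 * a * cos w + a\<^sup>2 = da w" by (simp add: da_def)
    have e2: "da w + G * u = r * db w"
      unfolding da_def db_def using cr cdef rb by (simp add: algebra_simps)
    have "spec_y Pi0 s2 a w = s2 * ((da w + G * u) / da w)"
      unfolding spec_y_def e1 P u_def using dapos[of w] by (simp add: field_simps)
    then show ?thesis by (simp add: e2)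
  qed
  have pw: "gauss_KL s2 (spec_y Pi0 s2 a w) =
      (ln r + ln (db w) - ln (da w) - (G * u / r) * (1 / db w)) / 2" for w
  proof -
    have q: "spec_y Pi0 s2 a w / s2 = r * db w / da w" using s2 by (simp add: spec)
    have l: "ln (r * db w / da w) = ln r + ln (db w) - ln (da w)"
      using rpos dapos[of w] dbpos[of w] by (simp add: ln_div ln_mult)
    have e2: "da w + G * u = r * db w"
      unfolding da_def db_def using cr cdef rb by (simp add: algebra_simps)
    have i1: "s2 / spec_y Pi0 s2 a w = da w / (r * db w)"
      unfolding spec using s2 rpos dapos[of w] dbpos[of w] by (simp add: field_simps)
    have i2: "da w / (r * db w) - 1 = (da w - r * db w) / (r * db w)"
      using rpos dbpos[of w] by (simp add: field_simps)
    have i3: "da w - r * db w = - (G * u)" using e2 by linarith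
    have i: "s2 / spec_y Pi0 s2 a w - 1 = - (G * u / r) * (1 / db w)"
      unfolding i1 i2 i3 by simp
    show ?thesis by (simp only: gauss_KL_def q l add_diff_eq[symmetric] i) simp
  qed
  have I: "((\<lambda>w. (ln r + ln (db w) - ln (da w) - (G * u / r) * (1 / db w)) / 2) has_integral
            ((2*pi*ln r + 0 - 0 - (G*u/r) * (2*pi/(1-b\<^sup>2))) / 2)) {0..2*pi}"
  proof -
    have h0: "((\<lambda>w. ln r) has_integral (2*pi*ln r)) {0..2*pi}"
      using has_integral_const_real[of "ln r" 0 "2*pi"] by simp
    have h1: "((\<lambda>w. ln (db w)) has_integral 0) {0..2*pi}"
      unfolding db_def using integral_logpoisson[OF b0 b1] by simp
    have h2: "((\<lambda>w. ln (da w)) has_integral 0) {0..2*pi}"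
      unfolding da_def using integral_logpoisson[of a] a by simp
    have h3: "((\<lambda>w. (G * u / r) * (1 / db w)) has_integral ((G*u/r) * (2*pi/(1-b\<^sup>2)))) {0..2*pi}"
      unfolding db_def by (rule has_integral_mult_right[OF integral_poisson[OF b0 b1]])
    have "((\<lambda>w. (ln r + ln (db w) - ln (da w) - (G * u / r) * (1 / db w)) * (1/2)) has_integral
            ((2*pi*ln r + 0 - 0 - (G*u/r) * (2*pi/(1-b\<^sup>2))) * (1/2))) {0..2*pi}"
      by (intro has_integral_mult_left has_integral_diff has_integral_add h0 h1 h2 h3)
    then show ?thesis by simp
  qed
  have "err_exp Pi0 s2 a = ((2*pi*ln r + 0 - 0 - (G*u/r) * (2*pi/(1-b\<^sup>2))) / 2) / (2*pi)"
  proof -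
    have fe: "(\<lambda>\<omega>. gauss_KL s2 (spec_y Pi0 s2 a \<omega>)) = (\<lambda>w. (ln r + ln (db w) - ln (da w) - (G * u / r) * (1 / db w)) / 2)"
      by (rule ext) (rule pw)
    show ?thesis unfolding err_exp_def fe integral_unique[OF I] ..
  qed
  also have "\<dots> = (ln r - G*u/(r*(1-b\<^sup>2))) / 2"
    by (simp add: field_simps)
  also have "G*u/(r*(1-b\<^sup>2)) = G*(r-1)/(1+G-(1-G)*r)"
  proof -
    have den: "1+G-(1-G)*r > 0" using den_pos[OF G r1 r2] .
    have ra: "r*r - a*a > 0" using a r1 by (smt (verit) mult_strict_mono)
    have r1b: "r*(1-b\<^sup>2) = (r*r - a*a)/r" using rpos by (simp add: b_def field_simps power2_eq_square)
    have key: "u * r * (1+G-(1-G)*r) = (r-1)*(r*r - a*a)"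
    proof -
      have "u * r * (1+G-(1-G)*r) - (r-1)*(r*r - a*a) = -(r+1)*(r\<^sup>2 - c*r + a\<^sup>2)"
        unfolding cdef u_def by (simp add: power2_eq_square algebra_simps)
      then show ?thesis using quad by simp
    qed
    have k2: "G*u*r*(1+G-(1-G)*r) = G*(r-1)*(r*r - a*a)"
      using arg_cong[OF key, of "\<lambda>x. G*x"] by (simp add: algebra_simps)
    have "G*u/((r*r-a*a)/r) = (G*u*r)/(r*r-a*a)" using rpos by simp
    also have "\<dots> = G*(r-1)/(1+G-(1-G)*r)"
      using ra den k2 by (simp add: frac_eq_eq)
    finally show ?thesis unfolding r1b .
  qed
  finally show ?thesis by (simp add: kf_def r_def G_def)
qed



lemma kf_ineq:
  fixes G r rs :: real
  assumes G: "0 < G" "G < 1" and r: "r > 0" and rs: "rs > 0"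
   and D: "1+G-(1-G)*r > 0" and E: "1+G-(1-G)*rs > 0" and Eq: "(1+G-(1-G)*rs)\<^sup>2 = 2*G\<^sup>2*rs"
  shows "kf G r + 2*G\<^sup>2*(1-G)*(r-rs)\<^sup>2/((1+G-(1-G)*rs)\<^sup>2*(1+G-(1-G)*r)) \<le> kf G rs"
proof -
  define D where "D = 1+G-(1-G)*r"
  define E where "E = 1+G-(1-G)*rs"
  have Dp: "D > 0" and Ep: "E > 0" using D E by (auto simp: D_def E_def)
  have l: "ln r - ln rs \<le> (r - rs)/rs"
  proof -
    have "ln r - ln rs = ln (r/rs)" using r rs by (simp add: ln_div)
    also have "\<dots> \<le> r/rs - 1" using r rs by (intro ln_le_minus_one) simp
    also have "\<dots> = (r - rs)/rs" using rs by (simp add: field_simps)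
    finally show ?thesis .
  qed
  have num: "(r-1)*E - (rs-1)*D = 2*G*(r-rs)" by (simp add: D_def E_def algebra_simps)
  have g: "G*(r-1)/D - G*(rs-1)/E = 2*G\<^sup>2*(r-rs)/(D*E)"
  proof -
    have "G*(r-1)/D - G*(rs-1)/E = G*((r-1)*E - (rs-1)*D)/(D*E)"
      using Dp Ep by (simp add: field_simps)
    then show ?thesis unfolding num by (simp add: power2_eq_square algebra_simps)
  qed
  have inv: "1/rs = 2*G\<^sup>2/E\<^sup>2" using Eq rs G by (simp add: E_def field_simps)
  have diffk: "kf G r - kf G rs = (ln r - ln rs) - 2*G\<^sup>2*(r-rs)/(D*E)"
    using g by (simp add: kf_def D_def E_def)
  have DE: "D - E = -(1-G)*(r-rs)" by (simp add: D_def E_def algebra_simps)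
  have fin: "(r-rs)*(2*G\<^sup>2/E\<^sup>2) - 2*G\<^sup>2*(r-rs)/(D*E) = 2*G\<^sup>2*(r-rs)*(D-E)/(E\<^sup>2*D)"
    using Dp Ep by (simp add: field_simps power2_eq_square)
  also have "\<dots> = - (2*G\<^sup>2*(1-G)*(r-rs)\<^sup>2/(E\<^sup>2*D))"
  proof -
    have "2*G\<^sup>2*(r-rs)*(D-E) = - (2*G\<^sup>2*(1-G)*(r-rs)\<^sup>2)"
      unfolding DE by (simp add: power2_eq_square algebra_simps)
    then show ?thesis by (simp only: minus_divide_left)
  qed
  finally have fin2: "(r-rs)*(2*G\<^sup>2/E\<^sup>2) - 2*G\<^sup>2*(r-rs)/(D*E) = - (2*G\<^sup>2*(1-G)*(r-rs)\<^sup>2/(E\<^sup>2*D))" .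
  have "(r - rs)/rs = (r-rs)*(2*G\<^sup>2/E\<^sup>2)" using inv by (metis times_divide_eq_right mult_1_right)
  then have "kf G r - kf G rs \<le> - (2*G\<^sup>2*(1-G)*(r-rs)\<^sup>2/(E\<^sup>2*D))"
    using diffk l fin2 by linarith
  then show ?thesis unfolding D_def E_def by linarith
qed

lemma err_exp_all:
  assumes s2: "s2 > 0" and Pi0: "Pi0 > 0" and a: "0 \<le> a" "a \<le> 1"
  shows "err_exp Pi0 s2 a = kf (Pi0/s2) (rr (Pi0/s2) a) / 2"
proof (cases "a < 1")
  case True
  then show ?thesis using err_exp_closed[OF s2 Pi0 a(1)] by simp
next
  case False
  then have a1: "a = 1" using a by simp
  have "spec_y Pi0 s2 1 w = s2" for w by (simp add: spec_y_def)
  then have "gauss_KL s2 (spec_y Pi0 s2 1 w) = 0" for w using s2 by (simp add: gauss_KL_def)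
  then have "err_exp Pi0 s2 1 = 0" by (simp add: err_exp_def)
  moreover have "rr (Pi0/s2) 1 = 1" by (simp add: rr_def cc_def)
  ultimately show ?thesis by (simp add: a1 kf_def)
qed

lemma sqrt2_bounds: "sqrt 2 < 2" "1.4 < sqrt (2::real)"
proof -
  show "sqrt 2 < 2" by (rule real_less_lsqrt) auto
  show "1.4 < sqrt (2::real)" by (rule real_less_rsqrt) (simp add: power2_eq_square)
qed

lemma opt_point:
  fixes G :: real
  assumes G: "0 < G" "G < 1"
  obtains s am where "1 < s" "0 < am" "am < 1" "rr G am = s\<^sup>2" "s\<^sup>2 \<le> 1 + G"
    "(1+G-(1-G)* s\<^sup>2)\<^sup>2 = 2*G\<^sup>2* s\<^sup>2"
    "1 - am\<^sup>2 = (s\<^sup>2-1)\<^sup>2/(1-(1-G)* s\<^sup>2)" "G*(sqrt 2 - 1) \<le> 1-(1-G)* s\<^sup>2"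
    "(cc G am)\<^sup>2 - 2*(s\<^sup>2 + am^4/s\<^sup>2) = 0"
proof -
  define p where "p = (\<lambda>s::real. (1-G)* s\<^sup>2 + sqrt 2 * G * s - (1+G))"
  define t where "t = sqrt (1+G)"
  have t0: "t > 0" and t2: "t\<^sup>2 = 1 + G" using G by (auto simp: t_def)
  have t1: "1 \<le> t" using G by (simp add: t_def)
  have tlt: "t < sqrt 2" using G by (simp add: t_def)
  have cont: "continuous_on {1..t} p" unfolding p_def by (intro continuous_intros)
  have p1: "p 1 < 0"
  proof -
    have "p 1 = G * (sqrt 2 - 2)" by (simp add: p_def algebra_simps)
    moreover have "G * (sqrt 2 - 2) < 0" using G sqrt2_bounds by (simp add: mult_pos_neg)
    ultimately show ?thesis by simp
  qed
  have pt: "p t > 0"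
  proof -
    have "p t = G * t * (sqrt 2 - t)" unfolding p_def t2 using t2
      by (simp add: power2_eq_square algebra_simps)
    moreover have "G * t * (sqrt 2 - t) > 0" using G t0 tlt by simp
    ultimately show ?thesis by simp
  qed
  obtain s where s: "1 \<le> s" "s \<le> t" "p s = 0"
    using IVT'[of p 1 0 t] p1 pt t1 cont by auto
  have s1: "1 < s" using s p1 by (cases "s = 1") auto
  have st: "s < t" using s pt by (cases "s = t") auto
  have "s\<^sup>2 < t\<^sup>2" by (rule power_strict_mono) (use st s1 in auto)
  then have s2lt: "s\<^sup>2 < 1 + G" using t2 by simp
  then have s2le: "s\<^sup>2 \<le> 1 + G" by simp
  define E where "E = 1+G-(1-G)* s\<^sup>2"
  have Es: "E = sqrt 2 * G * s" using s(3) by (simp add: p_def E_def algebra_simps)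
  have E2: "E\<^sup>2 = 2*G\<^sup>2* s\<^sup>2" unfolding Es by (simp add: power_mult_distrib)
  define D0 where "D0 = 1-(1-G)* s\<^sup>2"
  have D0: "D0 = G * (sqrt 2 * s - 1)" using Es by (simp add: D0_def E_def algebra_simps)
  have D0ge: "G*(sqrt 2 - 1) \<le> D0"
  proof -
    have "sqrt 2 * 1 \<le> sqrt 2 * s" using s1 by simp
    then show ?thesis unfolding D0 using G by (simp add: mult_left_mono)
  qed
  have "sqrt 2 - 1 > 0" using sqrt2_bounds by simp
  then have "G*(sqrt 2 - 1) > 0" using G by simp
  then have D0pos: "D0 > 0" using D0ge by linarith
  define N where "N = 1 + G - s\<^sup>2"
  have Npos: "N > 0" using s2lt by (simp add: N_def)
  have s2pos: "s\<^sup>2 > 0" using s1 by simp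
  define A where "A = s\<^sup>2 * N / D0"
  have Apos: "A > 0" using s2pos Npos D0pos by (simp add: A_def)
  define am where "am = sqrt A"
  have am2: "am\<^sup>2 = A" using Apos by (simp add: am_def)
  have am0: "am > 0" using Apos by (simp add: am_def)
  have oneA: "1 - A = (s\<^sup>2-1)\<^sup>2/D0"
  proof -
    have "D0 - s\<^sup>2 * N = (s\<^sup>2-1)\<^sup>2" by (simp add: D0_def N_def power2_eq_square algebra_simps)
    then show ?thesis using D0pos by (simp add: A_def field_simps)
  qed
  have Alt: "A < 1"
  proof -
    have "s\<^sup>2 > 1" using s1 by (simp add: one_less_power)
    then have "(s\<^sup>2-1)\<^sup>2 > 0" by simp
    then have "(s\<^sup>2-1)\<^sup>2/D0 > 0" using D0pos by simp
    then show ?thesis using oneA by linarith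
  qed
  have am1: "am < 1" using Alt Apos by (simp add: am_def)
  have ccA: "cc G am = s\<^sup>2 + A/s\<^sup>2"
  proof -
    have AD: "A * D0 = s\<^sup>2 * N" using D0pos by (simp add: A_def)
    have "cc G am * s\<^sup>2 = s\<^sup>2 * s\<^sup>2 + A"
      unfolding cc_def am2 using AD by (simp add: D0_def N_def algebra_simps)
    then show ?thesis using s2pos by (simp add: field_simps)
  qed
  have rrA: "rr G am = s\<^sup>2"
  proof -
    have "(cc G am)\<^sup>2 - 4*am\<^sup>2 = (s\<^sup>2 - A/s\<^sup>2)\<^sup>2"
      unfolding ccA am2 using s1 by (simp add: power2_eq_square field_simps)
    moreover have "A/s\<^sup>2 \<le> s\<^sup>2"
    proof -
      have "s\<^sup>2 * 1 \<le> s\<^sup>2 * s\<^sup>2" apply (rule mult_left_mono) using s1 by (auto simp: one_le_power)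
      moreover have "s\<^sup>2 > 1" using s1 by (simp add: one_less_power)
      ultimately have "A \<le> s\<^sup>2 * s\<^sup>2" using Alt by linarith
      then show ?thesis using s2pos by (simp add: divide_le_eq)
    qed
    ultimately have "sqrt ((cc G am)\<^sup>2 - 4*am\<^sup>2) = s\<^sup>2 - A/s\<^sup>2" by simp
    then show ?thesis unfolding rr_def ccA by simp
  qed
  have opt: "(cc G am)\<^sup>2 - 2*(s\<^sup>2 + am^4/s\<^sup>2) = 0"
  proof -
    define r where "r = s\<^sup>2"
    define M where "M = N/D0"
    have rpos: "r > 0" using s2pos by (simp add: r_def)
    have NM: "N = M*D0" using D0pos by (simp add: M_def)
    have AM: "A = r*M" by (simp add: A_def M_def r_def)
    have am4: "am^4 = (r*M)\<^sup>2" proof -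
      have "am^4 = (am\<^sup>2)\<^sup>2" by (simp flip: power_mult)
      then show ?thesis using am2 AM by simp
    qed
    have c2: "cc G am = r + M" unfolding ccA AM r_def[symmetric] using rpos by simp
    have X: "(cc G am)\<^sup>2 - 2*(s\<^sup>2 + am^4/s\<^sup>2) = (r+M)\<^sup>2 - 2*r - 2*r*M\<^sup>2"
      unfolding c2 am4 r_def[symmetric] using rpos by (simp add: power2_eq_square)
    have poly: "(r*D0 + N)\<^sup>2 - 2*r*D0\<^sup>2 - 2*r*N\<^sup>2 = (r-1)\<^sup>2 * (E\<^sup>2 - 2*G\<^sup>2*r)"
      unfolding D0_def N_def E_def r_def by (simp add: power2_eq_square algebra_simps)
    have "((r+M)\<^sup>2 - 2*r - 2*r*M\<^sup>2) * D0\<^sup>2 = (r*D0 + N)\<^sup>2 - 2*r*D0\<^sup>2 - 2*r*N\<^sup>2"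
      unfolding NM by (simp add: power2_eq_square algebra_simps)
    also have "\<dots> = (r-1)\<^sup>2 * (E\<^sup>2 - 2*G\<^sup>2*r)" by (rule poly)
    also have "\<dots> = 0" by (simp add: E2 r_def)
    finally show ?thesis unfolding X using D0pos by simp
  qed
  show ?thesis
    apply (rule that[of s am])
    using s1 am0 am1 rrA s2le E2 oneA am2 D0ge opt
    by (simp_all add: E_def D0_def)
qed



lemma core:
  assumes s2: "s2 > 0" and Pi0: "Pi0 > 0" and G1: "Pi0/s2 < 1"
  obtains am where "0 < am" "am < 1"
    "\<forall>a\<in>{0..1}. err_exp Pi0 s2 a \<le> err_exp Pi0 s2 am"
    "opt_eq_lhs Pi0 s2 am = 0"
    "\<forall>am'\<in>{0..1}. (\<forall>a\<in>{0..1}. err_exp Pi0 s2 a \<le> err_exp Pi0 s2 am') \<longrightarrow> am' = am"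
    "1 - am\<^sup>2 \<le> (Pi0/s2)/(sqrt 2 - 1)"
proof -
  define G where "G = Pi0/s2"
  have G: "0 < G" "G < 1" using s2 Pi0 G1 by (auto simp: G_def)
  obtain s am where s1: "1 < s" and am0: "0 < am" and am1: "am < 1" and rrA: "rr G am = s\<^sup>2"
    and s2le: "s\<^sup>2 \<le> 1 + G" and Eq: "(1+G-(1-G)* s\<^sup>2)\<^sup>2 = 2*G\<^sup>2* s\<^sup>2"
    and oneA: "1 - am\<^sup>2 = (s\<^sup>2-1)\<^sup>2/(1-(1-G)* s\<^sup>2)" and D0ge: "G*(sqrt 2 - 1) \<le> 1-(1-G)* s\<^sup>2"
    and opt: "(cc G am)\<^sup>2 - 2*(s\<^sup>2 + am^4/s\<^sup>2) = 0"
    using opt_point[OF G] by blast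
  have s2g1: "s\<^sup>2 > 1" using s1 by (simp add: one_less_power)
  have sq2: "sqrt 2 - 1 > 0" using sqrt2_bounds by simp
  have "G*(sqrt 2 - 1) > 0" using G sq2 by simp
  then have D0pos: "1-(1-G)* s\<^sup>2 > 0" using D0ge by linarith
  have Epos: "1+G-(1-G)* s\<^sup>2 > 0" using den_pos[OF G(1) _ s2le] s2g1 by simp
  have EE: "\<forall>a\<in>{0..1}. err_exp Pi0 s2 a = kf G (rr G a) / 2"
    using err_exp_all[OF s2 Pi0] by (simp add: G_def)
  have amE: "err_exp Pi0 s2 am = kf G (s\<^sup>2) / 2" using EE am0 am1 rrA by simp
  have ineq: "kf G (rr G a) + 2*G\<^sup>2*(1-G)*(rr G a - s\<^sup>2)\<^sup>2/((1+G-(1-G)* s\<^sup>2)\<^sup>2*(1+G-(1-G)*rr G a)) \<le> kf G (s\<^sup>2)"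
    and Dp: "1+G-(1-G)*rr G a > 0"
    if a: "a \<in> {0..1}" for a
  proof -
    have r1: "1 \<le> rr G a" and r2: "rr G a \<le> 1 + G" using rr_props[OF G(1)] a by auto
    show Dp: "1+G-(1-G)*rr G a > 0" using den_pos[OF G(1) r1 r2] .
    show "kf G (rr G a) + 2*G\<^sup>2*(1-G)*(rr G a - s\<^sup>2)\<^sup>2/((1+G-(1-G)* s\<^sup>2)\<^sup>2*(1+G-(1-G)*rr G a)) \<le> kf G (s\<^sup>2)"
      using kf_ineq[OF G _ _ Dp Epos Eq] r1 s2g1 s1 by simp
  qed
  have maxi: "\<forall>a\<in>{0..1}. err_exp Pi0 s2 a \<le> err_exp Pi0 s2 am"
  proof
    fix a :: real assume a: "a \<in> {0..1}"
    have "0 \<le> 2*G\<^sup>2*(1-G)*(rr G a - s\<^sup>2)\<^sup>2/((1+G-(1-G)* s\<^sup>2)\<^sup>2*(1+G-(1-G)*rr G a))"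
      using G Dp[OF a] Epos by (intro divide_nonneg_pos mult_nonneg_nonneg mult_pos_pos) auto
    then have "kf G (rr G a) \<le> kf G (s\<^sup>2)" using ineq[OF a] by linarith
    moreover have "err_exp Pi0 s2 a = kf G (rr G a) / 2" using EE a by blast
    ultimately show "err_exp Pi0 s2 a \<le> err_exp Pi0 s2 am" using amE by linarith
  qed
  have opteq: "opt_eq_lhs Pi0 s2 am = 0"
    unfolding opt_eq_lhs_def Let_def Re_of_eq[OF s2] G_def[symmetric] rrA
    using opt by (simp add: cc_def)
  have uniq: "\<forall>am'\<in>{0..1}. (\<forall>a\<in>{0..1}. err_exp Pi0 s2 a \<le> err_exp Pi0 s2 am') \<longrightarrow> am' = am"
  proof (intro ballI impI)
    fix am' :: real assume am': "am' \<in> {0..1}" and mx: "\<forall>a\<in>{0..1}. err_exp Pi0 s2 a \<le> err_exp Pi0 s2 am'"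
    have "err_exp Pi0 s2 am \<le> err_exp Pi0 s2 am'" using mx am0 am1 by auto
    moreover have "err_exp Pi0 s2 am' = kf G (rr G am') / 2" using EE am' by blast
    ultimately have "kf G (s\<^sup>2) \<le> kf G (rr G am')" using amE by linarith
    then have T0: "2*G\<^sup>2*(1-G)*(rr G am' - s\<^sup>2)\<^sup>2/((1+G-(1-G)* s\<^sup>2)\<^sup>2*(1+G-(1-G)*rr G am')) \<le> 0"
      using ineq[OF am'] by linarith
    have "(1+G-(1-G)* s\<^sup>2)\<^sup>2*(1+G-(1-G)*rr G am') > 0" using Epos Dp[OF am'] by simp
    then have "2*G\<^sup>2*(1-G)*(rr G am' - s\<^sup>2)\<^sup>2 \<le> 0" using T0 by (simp add: divide_le_0_iff)
    moreover have "2*G\<^sup>2*(1-G) > 0" using G by simp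
    ultimately have "(rr G am' - s\<^sup>2)\<^sup>2 \<le> 0" using G by (simp add: mult_le_0_iff)
    then have r': "rr G am' = s\<^sup>2" by simp
    have q1: "(rr G am')\<^sup>2 - cc G am' * rr G am' + am'\<^sup>2 = 0" using rr_props[OF G(1)] am' by auto
    have q2: "(rr G am)\<^sup>2 - cc G am * rr G am + am\<^sup>2 = 0" using rr_props[OF G(1)] am0 am1 by auto
    have e1: "am'\<^sup>2 * (1-(1-G)* s\<^sup>2) = s\<^sup>2 * (1 + G - s\<^sup>2)"
      using q1 unfolding r' cc_def by (simp add: power2_eq_square algebra_simps)
    have e2: "am\<^sup>2 * (1-(1-G)* s\<^sup>2) = s\<^sup>2 * (1 + G - s\<^sup>2)"
      using q2 unfolding rrA cc_def by (simp add: power2_eq_square algebra_simps)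
    have "am'\<^sup>2 = am\<^sup>2" using e1 e2 D0pos by (metis mult_right_cancel less_irrefl)
    then show "am' = am" using am' am0 by (simp add: power2_eq_iff_nonneg)
  qed
  have bound: "1 - am\<^sup>2 \<le> G/(sqrt 2 - 1)"
  proof -
    have "0 \<le> s\<^sup>2 - 1" "s\<^sup>2 - 1 \<le> G" using s2g1 s2le by auto
    then have n: "(s\<^sup>2-1)\<^sup>2 \<le> G\<^sup>2" by (simp add: power_mono)
    have "(s\<^sup>2-1)\<^sup>2/(1-(1-G)* s\<^sup>2) \<le> G\<^sup>2/(1-(1-G)* s\<^sup>2)"
      using n D0pos by (simp add: divide_right_mono)
    also have "\<dots> \<le> G\<^sup>2/(G*(sqrt 2 - 1))"
      using D0ge G sq2 D0pos by (intro divide_left_mono mult_pos_pos) auto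
    also have "\<dots> = G/(sqrt 2 - 1)" using G by (simp add: power2_eq_square)
    finally show ?thesis using oneA by simp
  qed
  show ?thesis
    using that[OF am0 am1 maxi opteq uniq] bound by (simp add: G_def)
qed



theorem theorem4:
  fixes s2 :: real
  assumes s2_pos: "s2 > 0"
  shows
    "(\<forall>Pi0. 0 < Pi0 \<and> Pi0 / s2 < 1 \<longrightarrow>
        (\<exists>am. 0 < am \<and> am < 1
           \<and> (\<forall>a\<in>{0..1}. err_exp Pi0 s2 a \<le> err_exp Pi0 s2 am)
           \<and> opt_eq_lhs Pi0 s2 am = 0
           \<and> (\<forall>A>0. let \<Delta>s = - ln am / A in
                 \<Delta>s > 0 \<and> (\<forall>\<Delta>\<ge>0. err_exp Pi0 s2 (exp (- A * \<Delta>))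
                                    \<le> err_exp Pi0 s2 (exp (- A * \<Delta>s))))))
     \<and> (\<forall>\<epsilon>>0. \<exists>\<delta>>0. \<forall>Pi0 am. 0 < Pi0 \<and> Pi0 / s2 < \<delta> \<and> Pi0 / s2 < 1
            \<and> am \<in> {0..1} \<and> (\<forall>a\<in>{0..1}. err_exp Pi0 s2 a \<le> err_exp Pi0 s2 am)
            \<longrightarrow> am > 1 - \<epsilon>)"
proof (rule conjI)
  show "\<forall>Pi0. 0 < Pi0 \<and> Pi0 / s2 < 1 \<longrightarrow>
        (\<exists>am. 0 < am \<and> am < 1
           \<and> (\<forall>a\<in>{0..1}. err_exp Pi0 s2 a \<le> err_exp Pi0 s2 am)
           \<and> opt_eq_lhs Pi0 s2 am = 0
           \<and> (\<forall>A>0. let \<Delta>s = - ln am / A in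
                 \<Delta>s > 0 \<and> (\<forall>\<Delta>\<ge>0. err_exp Pi0 s2 (exp (- A * \<Delta>))
                                    \<le> err_exp Pi0 s2 (exp (- A * \<Delta>s)))))"
  proof (intro allI impI)
    fix Pi0 :: real assume h: "0 < Pi0 \<and> Pi0 / s2 < 1"
    obtain am where am0: "0 < am" and am1: "am < 1"
      and maxi: "\<forall>a\<in>{0..1}. err_exp Pi0 s2 a \<le> err_exp Pi0 s2 am"
      and opteq: "opt_eq_lhs Pi0 s2 am = 0"
      using core[OF s2_pos] h by blast
    have D: "\<forall>A>0. let \<Delta>s = - ln am / A in
                 \<Delta>s > 0 \<and> (\<forall>\<Delta>\<ge>0. err_exp Pi0 s2 (exp (- A * \<Delta>))
                                    \<le> err_exp Pi0 s2 (exp (- A * \<Delta>s)))"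
    proof (intro allI impI)
      fix A :: real assume A: "A > 0"
      have ln: "ln am < 0" using am0 am1 by simp
      have pos: "- ln am / A > 0" using ln A by (simp add: divide_neg_pos)
      have ex: "exp (- A * (- ln am / A)) = am" using A am0 by simp
      have all: "\<forall>\<Delta>\<ge>0. err_exp Pi0 s2 (exp (- A * \<Delta>)) \<le> err_exp Pi0 s2 am"
      proof (intro allI impI)
        fix \<Delta> :: real assume "\<Delta> \<ge> 0"
        then have "- A * \<Delta> \<le> 0" using A by simp
        then have "exp (- A * \<Delta>) \<in> {0..1}" by simp
        then show "err_exp Pi0 s2 (exp (- A * \<Delta>)) \<le> err_exp Pi0 s2 am" using maxi by blast
      qed
      show "let \<Delta>s = - ln am / A in
                 \<Delta>s > 0 \<and> (\<forall>\<Delta>\<ge>0. err_exp Pi0 s2 (exp (- A * \<Delta>))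
                                    \<le> err_exp Pi0 s2 (exp (- A * \<Delta>s)))"
        unfolding Let_def ex using pos all by simp
    qed
    show "\<exists>am. 0 < am \<and> am < 1
           \<and> (\<forall>a\<in>{0..1}. err_exp Pi0 s2 a \<le> err_exp Pi0 s2 am)
           \<and> opt_eq_lhs Pi0 s2 am = 0
           \<and> (\<forall>A>0. let \<Delta>s = - ln am / A in
                 \<Delta>s > 0 \<and> (\<forall>\<Delta>\<ge>0. err_exp Pi0 s2 (exp (- A * \<Delta>))
                                    \<le> err_exp Pi0 s2 (exp (- A * \<Delta>s))))"
      using am0 am1 maxi opteq D by blast
  qed
next
  show "\<forall>\<epsilon>>0. \<exists>\<delta>>0. \<forall>Pi0 am. 0 < Pi0 \<and> Pi0 / s2 < \<delta> \<and> Pi0 / s2 < 1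
            \<and> am \<in> {0..1} \<and> (\<forall>a\<in>{0..1}. err_exp Pi0 s2 a \<le> err_exp Pi0 s2 am)
            \<longrightarrow> am > 1 - \<epsilon>"
  proof (intro allI impI)
    fix \<epsilon> :: real assume eps: "\<epsilon> > 0"
    have sq2: "sqrt 2 - 1 > 0" using sqrt2_bounds by simp
    show "\<exists>\<delta>>0. \<forall>Pi0 am. 0 < Pi0 \<and> Pi0 / s2 < \<delta> \<and> Pi0 / s2 < 1
            \<and> am \<in> {0..1} \<and> (\<forall>a\<in>{0..1}. err_exp Pi0 s2 a \<le> err_exp Pi0 s2 am)
            \<longrightarrow> am > 1 - \<epsilon>"
    proof (intro exI[of _ "\<epsilon> * (sqrt 2 - 1)"] conjI allI impI)
      show "\<epsilon> * (sqrt 2 - 1) > 0" using eps sq2 by simp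
      fix Pi0 am' :: real
      assume h: "0 < Pi0 \<and> Pi0 / s2 < \<epsilon> * (sqrt 2 - 1) \<and> Pi0 / s2 < 1
            \<and> am' \<in> {0..1} \<and> (\<forall>a\<in>{0..1}. err_exp Pi0 s2 a \<le> err_exp Pi0 s2 am')"
      obtain am where am0: "0 < am" and am1: "am < 1"
        and uniq: "\<forall>am'\<in>{0..1}. (\<forall>a\<in>{0..1}. err_exp Pi0 s2 a \<le> err_exp Pi0 s2 am') \<longrightarrow> am' = am"
        and bnd: "1 - am\<^sup>2 \<le> (Pi0/s2)/(sqrt 2 - 1)"
        using core[OF s2_pos] h by blast
      have eq: "am' = am" using uniq h by blast
      have "Pi0/s2 < \<epsilon> * (sqrt 2 - 1)" using h by blast
      then have "(Pi0/s2)/(sqrt 2 - 1) < \<epsilon>" using sq2 by (simp only: divide_less_eq) simp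
      moreover have "am\<^sup>2 \<le> am" using am0 am1 by (simp add: power2_eq_square mult_left_le)
      ultimately show "am' > 1 - \<epsilon>" using bnd eq by linarith
    qed
  qed
qed

end
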